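(* Let $P$ be a finite poset and $\Bbbk$ a commutative ring with unit. Suppose that for every $a\in P$ one has $\widetilde H_m\bigl(\Delta(P_{<a}),\Bbbk\bigr)=0$ for all $m\le d(a)-2$. Then for every $n$ the simplicial chain complex $C_\bullet(\Delta(P),\Bbbk)$ of the order complex of $P$ and the conic chain complex $\mathcal C_\bullet(P,\Bbbk)$ have isomorphic $n$-th homology.
   Context: For a finite poset $P$ and $a\in P$ put $P_{\le a}=\{x\in P: x\le a\}$ and $P_{<a}=\{x\in P: x<a\}$. For a subset $S\subseteq P$, $\Delta(S)$ denotes the order complex of $S$ (the simplicial complex whose faces are the chains of $S$). The dimension of $a$ is $d(a)=d_P(a)=\dim\Delta(P_{\le a})$. For $n\in\mathbb Z$ put $P^n=\{a\in P: d(a)\le n\}$ and $\Delta^n=\Delta(P^n)$ (so $\Delta^{-1}$ is the empty complex). Faces of order complexes are oriented by listing their vertices in decreasing order. The conic chain complex $\mathcal C_\bullet(P,\Bbbk)$ has $\mathcal C_n(P,\Bbbk)=H_n(\Delta^n,\Delta^{n-1};\Bbbk)$ (relative simplicial homology) for $n\ge 0$, and for $n\ge1$ its differential $\partial_n$ is the composition $\iota_{n-1}\circ\delta_n$, where $\delta_n\colon H_n(\Delta^n,\Delta^{n-1};\Bbbk)\to\widetilde H_{n-1}(\Delta^{n-1};\Bbbk)$ is the connecting map of the long exact sequence of the pair $(\Delta^n,\Delta^{n-1})$ and $\iota_{n-1}\colon \widetilde H_{n-1}(\Delta^{n-1};\Bbbk)\to H_{n-1}(\Delta^{n-1},\Delta^{n-2};\Bbbk)$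 is the (injective) natural map of the long exact sequence of the pair $(\Delta^{n-1},\Delta^{n-2})$. *)

theory Defs
  imports Main
begin

definition is_chain :: "'a rel \<Rightarrow> 'a set \<Rightarrow> bool" where
  "is_chain r \<sigma> \<longleftrightarrow> (\<forall>x\<in>\<sigma>. \<forall>y\<in>\<sigma>. (x, y) \<in> r \<or> (y, x) \<in> r)"

definition order_complex :: "'a rel \<Rightarrow> 'a set \<Rightarrow> 'a set set" where
  "order_complex r S = {\<sigma>. \<sigma> \<subseteq> S \<and> \<sigma> \<noteq> {} \<and> finite \<sigma> \<and> is_chain r \<sigma>}"

definition below_eq :: "'a rel \<Rightarrow> 'a set \<Rightarrow> 'a \<Rightarrow> 'a set" where
  "below_eq r P a = {x \<in> P. (x, a) \<in> r}"

definition below :: "'a rel \<Rightarrow> 'a set \<Rightarrow> 'a \<Rightarrow> 'a set" where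
  "below r P a = {x \<in> P. (x, a) \<in> r \<and> x \<noteq> a}"

text \<open>d(a) = dim Delta(P_{<=a}) = (maximal number of vertices of a face) - 1.\<close>
definition pdim :: "'a rel \<Rightarrow> 'a set \<Rightarrow> 'a \<Rightarrow> nat" where
  "pdim r P a = Max (card ` order_complex r (below_eq r P a)) - 1"

text \<open>P^m = {a. d(a) <= m} and Delta^m, for integer m (Delta^{-1} is empty).\<close>
definition skel :: "'a rel \<Rightarrow> 'a set \<Rightarrow> int \<Rightarrow> 'a set" where
  "skel r P m = {a \<in> P. int (pdim r P a) \<le> m}"

definition Dskel :: "'a rel \<Rightarrow> 'a set \<Rightarrow> int \<Rightarrow> 'a set set" where
  "Dskel r P m = order_complex r (skel r P m)"

text \<open>An n-chain of the complex K is a function from faces to 'k supported on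
n-faces of K (faces with n+1 vertices); each face is oriented by listing its
vertices in decreasing order.\<close>
definition chains :: "'a set set \<Rightarrow> nat \<Rightarrow> ('a set \<Rightarrow> 'k::zero) set" where
  "chains K n = {c. \<forall>\<sigma>. c \<sigma> \<noteq> 0 \<longrightarrow> \<sigma> \<in> K \<and> card \<sigma> = Suc n}"

text \<open>Simplicial boundary of an n-chain: removing the vertex in position i (in
decreasing order) carries the sign (-1)^i; position of v in the face insert v tau
equals the number of elements of tau above v.\<close>
definition bd :: "'a rel \<Rightarrow> nat \<Rightarrow> ('a set \<Rightarrow> 'k::comm_ring_1) \<Rightarrow> 'a set \<Rightarrow> 'k" where
  "bd r n c \<tau> = (if n = 0 then 0 else
     (\<Sum>v\<in>{v. v \<notin> \<tau> \<and> c (insert v \<tau>) \<noteq> 0}.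
        (-1) ^ card {w \<in> \<tau>. (v, w) \<in> r} * c (insert v \<tau>)))"

definition cycles :: "'a rel \<Rightarrow> 'a set set \<Rightarrow> nat \<Rightarrow> ('a set \<Rightarrow> 'k::comm_ring_1) set" where
  "cycles r K n = {c \<in> chains K n. bd r n c = (\<lambda>_. 0)}"

definition boundaries :: "'a rel \<Rightarrow> 'a set set \<Rightarrow> nat \<Rightarrow> ('a set \<Rightarrow> 'k::comm_ring_1) set" where
  "boundaries r K n = bd r (Suc n) ` chains K (Suc n)"

text \<open>Reduced cycles: in degree 0 the cycles are the chains with coefficient
sum 0 (kernel of the augmentation).  Reduced homology in degree m vanishes iff
every reduced m-cycle is an m-boundary.\<close>
definition red_cycles :: "'a rel \<Rightarrow> 'a set set \<Rightarrow> nat \<Rightarrow> ('a set \<Rightarrow> 'k::comm_ring_1) set" where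
  "red_cycles r K m = {c \<in> chains K m. (if m = 0 then sum c K = 0 else bd r m c = (\<lambda>_. 0))}"

definition red_homology_vanishes :: "'a rel \<Rightarrow> 'a set set \<Rightarrow> nat \<Rightarrow> 'k::comm_ring_1 itself \<Rightarrow> bool" where
  "red_homology_vanishes r K m _ \<longleftrightarrow>
     (red_cycles r K m :: ('a set \<Rightarrow> 'k) set) \<subseteq> boundaries r K m"

text \<open>Relative homology H_n(K, L) = rel_cycles / rel_boundaries.\<close>
definition rel_cycles :: "'a rel \<Rightarrow> 'a set set \<Rightarrow> 'a set set \<Rightarrow> nat \<Rightarrow> ('a set \<Rightarrow> 'k::comm_ring_1) set" where
  "rel_cycles r K L n = {c \<in> chains K n. bd r n c \<in> chains L (n - 1)}"

definition rel_boundaries :: "'a rel \<Rightarrow> 'a set set \<Rightarrow> 'a set set \<Rightarrow> nat \<Rightarrow> ('a set \<Rightarrow> 'k::comm_ring_1) set" where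
  "rel_boundaries r K L n =
     {(\<lambda>\<sigma>. bd r (Suc n) c \<sigma> + l \<sigma>) | c l. c \<in> chains K (Suc n) \<and> l \<in> chains L n}"

text \<open>C_n(P) = H_n(Delta^n, Delta^{n-1}).  On a class [c] (c a relative cycle),
the connecting map gives [bd c] in reduced H_{n-1}(Delta^{n-1}) and the natural
map gives [bd c] in H_{n-1}(Delta^{n-1}, Delta^{n-2}).  Hence the n-th homology
of the conic complex is (by the third isomorphism theorem) the quotient of
conic_cycles by conic_boundaries below: the preimages in rel_cycles of the
kernel of the conic differential and of the image of the next differential.\<close>
definition conic_cycles :: "'a rel \<Rightarrow> 'a set \<Rightarrow> nat \<Rightarrow> ('a set \<Rightarrow> 'k::comm_ring_1) set" where
  "conic_cycles r P n =
     {c \<in> rel_cycles r (Dskel r P (int n)) (Dskel r P (int n - 1)) n.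
        bd r n c \<in> rel_boundaries r (Dskel r P (int n - 1)) (Dskel r P (int n - 2)) (n - 1)}"

definition conic_boundaries :: "'a rel \<Rightarrow> 'a set \<Rightarrow> nat \<Rightarrow> ('a set \<Rightarrow> 'k::comm_ring_1) set" where
  "conic_boundaries r P n =
     {(\<lambda>\<sigma>. bd r (Suc n) c \<sigma> + b \<sigma>) | c b.
        c \<in> rel_cycles r (Dskel r P (int n + 1)) (Dskel r P (int n)) (Suc n) \<and>
        b \<in> rel_boundaries r (Dskel r P (int n)) (Dskel r P (int n - 1)) n}"

text \<open>Z1/B1 and Z2/B2 (submodules of spaces of 'k-valued functions) are
isomorphic as 'k-modules iff there is a map f from Z1 to Z2 which is 'k-linear
modulo B2, satisfies f z in B2 iff z in B1 (well defined and injective on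
classes) and is surjective modulo B2.\<close>
definition quot_iso ::
  "('b \<Rightarrow> 'k::comm_ring_1) set \<Rightarrow> ('b \<Rightarrow> 'k) set \<Rightarrow> ('c \<Rightarrow> 'k) set \<Rightarrow> ('c \<Rightarrow> 'k) set \<Rightarrow> bool" where
  "quot_iso Z1 B1 Z2 B2 \<longleftrightarrow>
     (\<exists>f. (\<forall>z\<in>Z1. f z \<in> Z2) \<and>
          (\<forall>z\<in>Z1. \<forall>z'\<in>Z1. \<forall>a b.
              (\<lambda>x. f (\<lambda>y. a * z y + b * z' y) x - (a * f z x + b * f z' x)) \<in> B2) \<and>
          (\<forall>z\<in>Z1. f z \<in> B2 \<longleftrightarrow> z \<in> B1) \<and>
          (\<forall>w\<in>Z2. \<exists>z\<in>Z1. (\<lambda>x. w x - f z x) \<in> B2))"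

end

theory Submission
  imports Defs
begin



locale fposet =
  fixes P :: "'a set" and r :: "'a rel"
  assumes fin: "finite P" and po: "partial_order_on P r"
begin

lemma rsub: "r \<subseteq> P \<times> P" using po partial_order_onD by blast
lemma refl: "x \<in> P \<Longrightarrow> (x, x) \<in> r" using po partial_order_onD(1) by (auto simp: refl_on_def)
lemma trans': "(x, y) \<in> r \<Longrightarrow> (y, z) \<in> r \<Longrightarrow> (x, z) \<in> r"
  using po partial_order_onD(2) by (meson transE)
lemma antis: "(x, y) \<in> r \<Longrightarrow> (y, x) \<in> r \<Longrightarrow> x = y"
  using po partial_order_onD(3) by (meson antisymD)

lemma oc_sub: "S \<subseteq> S' \<Longrightarrow> order_complex r S \<subseteq> order_complex r S'"
  by (auto simp: order_complex_def)

lemma chain_sub: "is_chain r \<sigma> \<Longrightarrow> \<tau> \<subseteq> \<sigma> \<Longrightarrow> is_chain r \<tau>"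
  by (auto simp: is_chain_def)

lemma chain_max:
  assumes "finite \<sigma>" "\<sigma> \<noteq> {}" "is_chain r \<sigma>" "\<sigma> \<subseteq> P"
  shows "\<exists>a\<in>\<sigma>. \<forall>x\<in>\<sigma>. (x, a) \<in> r"
  using assms
proof (induction \<sigma> rule: finite_ne_induct)
  case (singleton x) then show ?case using refl by auto
next
  case (insert x F)
  then obtain m where m: "m \<in> F" "\<forall>y\<in>F. (y, m) \<in> r"
    using chain_sub[of "insert x F" F] by auto
  have "(x, m) \<in> r \<or> (m, x) \<in> r" using insert.prems m(1) by (auto simp: is_chain_def)
  then show ?case
  proof
    assume "(x, m) \<in> r" then show ?thesis using m by auto
  next
    assume "(m, x) \<in> r" then show ?thesis using m insert.prems refl trans' by blast
  qed
qed

definition OCb where "OCb a = order_complex r (below_eq r P a)"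

lemma OCb_fin: "finite (OCb a)"
proof -
  have "OCb a \<subseteq> Pow P" by (auto simp: OCb_def order_complex_def below_eq_def)
  then show ?thesis using fin by (meson finite_Pow_iff finite_subset)
qed

lemma OCb_single: "a \<in> P \<Longrightarrow> {a} \<in> OCb a"
  using refl by (auto simp: OCb_def order_complex_def below_eq_def is_chain_def)

lemma card_le_pdim: assumes "a \<in> P" "\<sigma> \<in> OCb a" shows "card \<sigma> \<le> Suc (pdim r P a)"
proof -
  have "card \<sigma> \<le> Max (card ` OCb a)" using OCb_fin assms by auto
  moreover have "1 \<le> Max (card ` OCb a)" using OCb_fin OCb_single[OF assms(1)]
    by (metis One_nat_def Max_ge card.empty card.insert empty_iff finite.intros(1) finite_imageI image_eqI order.trans le_refl)
  ultimately show ?thesis by (simp add: pdim_def OCb_def)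
qed

lemma pdim_attained: assumes "a \<in> P" shows "\<exists>\<sigma>\<in>OCb a. card \<sigma> = Suc (pdim r P a)"
proof -
  have ne: "card ` OCb a \<noteq> {}" using OCb_single[OF assms] by auto
  have "Max (card ` OCb a) \<in> card ` OCb a" using Max_in[OF finite_imageI[OF OCb_fin] ne] .
  then obtain \<sigma> where s: "\<sigma> \<in> OCb a" "card \<sigma> = Max (card ` OCb a)" by auto
  have "card \<sigma> \<ge> 1" using s(1) by (auto simp: OCb_def order_complex_def Suc_le_eq card_gt_0_iff)
  then show ?thesis using s by (auto simp: pdim_def OCb_def)
qed

lemma pdim_less: assumes "a \<in> P" "b \<in> P" "(b, a) \<in> r" "b \<noteq> a" shows "pdim r P b < pdim r P a"
proof -
  obtain \<sigma> where s: "\<sigma> \<in> OCb b" "card \<sigma> = Suc (pdim r P b)" using pdim_attained[OF assms(2)] by auto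
  have sb: "\<forall>x\<in>\<sigma>. (x, b) \<in> r \<and> x \<in> P" using s(1) by (auto simp: OCb_def order_complex_def below_eq_def)
  have an: "a \<notin> \<sigma>" using sb assms antis by blast
  have "insert a \<sigma> \<in> OCb a"
    using s(1) sb assms trans' refl
    by (auto simp: OCb_def order_complex_def below_eq_def is_chain_def)
  then have "card (insert a \<sigma>) \<le> Suc (pdim r P a)" using card_le_pdim assms by blast
  moreover have "finite \<sigma>" using s(1) by (auto simp: OCb_def order_complex_def)
  ultimately show ?thesis using an s(2) by simp
qed

lemma card_le_top:
  assumes "\<sigma> \<in> order_complex r S" "S \<subseteq> P"
  shows "\<exists>a\<in>\<sigma>. (\<forall>x\<in>\<sigma>. (x, a) \<in> r) \<and> card \<sigma> \<le> Suc (pdim r P a)"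
proof -
  have h: "finite \<sigma>" "\<sigma> \<noteq> {}" "is_chain r \<sigma>" "\<sigma> \<subseteq> P" using assms by (auto simp: order_complex_def)
  then obtain a where a: "a \<in> \<sigma>" "\<forall>x\<in>\<sigma>. (x, a) \<in> r" using chain_max by blast
  have "\<sigma> \<in> OCb a" using h a by (auto simp: OCb_def order_complex_def below_eq_def)
  then show ?thesis using a card_le_pdim h by blast
qed

lemma Dskel_card: assumes "\<sigma> \<in> Dskel r P m" shows "int (card \<sigma>) \<le> m + 1"
proof -
  have "skel r P m \<subseteq> P" by (auto simp: skel_def)
  then obtain a where "a \<in> \<sigma>" "card \<sigma> \<le> Suc (pdim r P a)"
    using card_le_top assms unfolding Dskel_def by blast
  moreover have "a \<in> skel r P m" using assms \<open>a \<in> \<sigma>\<close> by (auto simp: Dskel_def order_complex_def)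
  ultimately show ?thesis by (auto simp: skel_def)
qed

lemma chains_zero: assumes "c \<in> chains (Dskel r P m) k" "m < int k" shows "c = (\<lambda>_. 0)"
proof
  fix \<sigma> show "c \<sigma> = 0"
  proof (rule ccontr)
    assume "c \<sigma> \<noteq> 0"
    then have "\<sigma> \<in> Dskel r P m" "card \<sigma> = Suc k" using assms by (auto simp: chains_def)
    then show False using Dskel_card assms(2) by fastforce
  qed
qed

lemma Dskel_mono: "m \<le> m' \<Longrightarrow> Dskel r P m \<subseteq> Dskel r P m'"
  unfolding Dskel_def by (rule oc_sub) (auto simp: skel_def)

lemma chains_mono: "K \<subseteq> K' \<Longrightarrow> chains K n \<subseteq> chains K' n"
  by (auto simp: chains_def)

lemma pdim_lt_card: "a \<in> P \<Longrightarrow> pdim r P a < card P"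
proof -
  assume a: "a \<in> P"
  obtain \<sigma> where s: "\<sigma> \<in> OCb a" "card \<sigma> = Suc (pdim r P a)" using pdim_attained[OF a] by auto
  have "\<sigma> \<subseteq> P" using s(1) by (auto simp: OCb_def order_complex_def below_eq_def)
  then have "card \<sigma> \<le> card P" using fin card_mono by blast
  then show ?thesis using s by simp
qed

lemma Dskel_top: "Dskel r P (int (card P + j)) = order_complex r P"
proof -
  have "skel r P (int (card P + j)) = P" using pdim_lt_card by (fastforce simp: skel_def)
  then show ?thesis by (simp add: Dskel_def)
qed

lemma below_ne: assumes "a \<in> P" "pdim r P a \<ge> 1" shows "\<exists>b. b \<in> below r P a"
proof -
  obtain \<sigma> where s: "\<sigma> \<in> OCb a" "card \<sigma> = Suc (pdim r P a)" using pdim_attained[OF assms(1)] by auto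
  then have "card \<sigma> \<ge> 2" using assms by simp
  moreover have "\<not> \<sigma> \<subseteq> {a}"
  proof
    assume "\<sigma> \<subseteq> {a}" then have "card \<sigma> \<le> card {a}" by (rule card_mono[rotated]) simp
    then show False using \<open>card \<sigma> \<ge> 2\<close> by simp
  qed
  then obtain x where "x \<in> \<sigma>" "x \<noteq> a" by blast
  then show ?thesis using s(1) by (auto simp: OCb_def order_complex_def below_eq_def below_def)
qed

lemma below_skel: assumes "a \<in> P" "pdim r P a = Suc m" shows "below r P a \<subseteq> skel r P (int m)"
proof
  fix b assume "b \<in> below r P a"
  then have "b \<in> P" "(b, a) \<in> r" "b \<noteq> a" by (auto simp: below_def)
  then have "pdim r P b < Suc m" using pdim_less assms by metis
  then show "b \<in> skel r P (int m)" using \<open>b \<in> P\<close> by (auto simp: skel_def)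
qed

lemma oc_below_Dskel: assumes "a \<in> P" "pdim r P a = Suc m"
  shows "order_complex r (below r P a) \<subseteq> Dskel r P (int m)"
  unfolding Dskel_def by (rule oc_sub[OF below_skel[OF assms]])

lemma top_below: assumes "\<sigma> \<in> Dskel r P (int (Suc m))" "a \<in> \<sigma>" "pdim r P a = Suc m"
  shows "\<sigma> - {a} \<subseteq> below r P a"
proof
  fix x assume x: "x \<in> \<sigma> - {a}"
  have xs: "x \<in> skel r P (int (Suc m))" "a \<in> P" "x \<in> P" using assms x by (auto simp: Dskel_def order_complex_def skel_def)
  have "(x, a) \<in> r \<or> (a, x) \<in> r" using assms x by (auto simp: Dskel_def order_complex_def is_chain_def)
  moreover have "(a, x) \<notin> r"
  proof
    assume "(a, x) \<in> r"
    then have "pdim r P a < pdim r P x" using pdim_less xs x by blast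
    then show False using xs assms(3) by (auto simp: skel_def)
  qed
  ultimately show "x \<in> below r P a" using x xs by (auto simp: below_def)
qed

lemma top_unique: assumes "\<sigma> \<in> Dskel r P (int (Suc m))" "a \<in> \<sigma>" "pdim r P a = Suc m"
  "a' \<in> \<sigma>" "pdim r P a' = Suc m" shows "a' = a"
proof (rule ccontr)
  assume "a' \<noteq> a"
  then have "a' \<in> below r P a" using top_below[OF assms(1-3)] assms(4) by auto
  moreover have "a \<in> P" using assms by (auto simp: Dskel_def order_complex_def skel_def)
  ultimately have "pdim r P a' < pdim r P a" using pdim_less by (auto simp: below_def)
  then show False using assms by simp
qed

lemma not_top: assumes "\<sigma> \<in> Dskel r P (int (Suc m))" "\<forall>a\<in>\<sigma>. pdim r P a \<noteq> Suc m"
  shows "\<sigma> \<in> Dskel r P (int m)"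
  using assms by (fastforce simp: Dskel_def order_complex_def skel_def)

lemma has_top: assumes "a \<in> \<sigma>" "pdim r P a = Suc m" shows "\<sigma> \<notin> Dskel r P (int m)"
  using assms by (auto simp: Dskel_def order_complex_def skel_def)


end



context fposet begin

definition sg :: "'a \<Rightarrow> 'a set \<Rightarrow> 'k::comm_ring_1" where
  "sg v \<tau> = (-1) ^ card {w \<in> \<tau>. (v, w) \<in> r}"

definition supp :: "('a set \<Rightarrow> 'k::zero) \<Rightarrow> bool" where
  "supp c \<longleftrightarrow> (\<forall>\<sigma>. c \<sigma> \<noteq> 0 \<longrightarrow> \<sigma> \<subseteq> P)"

lemma bd_alt:
  assumes "supp c"
  shows "bd r (Suc n) c \<tau> = (\<Sum>v\<in>P-\<tau>. sg v \<tau> * c (insert v \<tau>))"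
proof -
  have sub: "{v. v \<notin> \<tau> \<and> c (insert v \<tau>) \<noteq> 0} \<subseteq> P - \<tau>" using assms by (auto simp: supp_def)
  have "(\<Sum>v\<in>{v. v \<notin> \<tau> \<and> c (insert v \<tau>) \<noteq> 0}. sg v \<tau> * c (insert v \<tau>)) =
        (\<Sum>v\<in>P-\<tau>. sg v \<tau> * c (insert v \<tau>))"
    by (rule sum.mono_neutral_left) (use fin sub in auto)
  then show ?thesis by (simp add: bd_def sg_def)
qed

lemma bd_0[simp]: "bd r 0 c = (\<lambda>_. 0)" by (auto simp: bd_def)

lemma supp_lin: "supp (c :: 'a set \<Rightarrow> 'k::comm_ring_1) \<Longrightarrow> supp c' \<Longrightarrow> supp (\<lambda>\<sigma>. x * c \<sigma> + y * c' \<sigma>)"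
proof (unfold supp_def, intro allI impI)
  fix \<sigma> assume "\<forall>\<sigma>. c \<sigma> \<noteq> 0 \<longrightarrow> \<sigma> \<subseteq> P" "\<forall>\<sigma>. c' \<sigma> \<noteq> 0 \<longrightarrow> \<sigma> \<subseteq> P" "x * c \<sigma> + y * c' \<sigma> \<noteq> 0"
  moreover have "c \<sigma> \<noteq> 0 \<or> c' \<sigma> \<noteq> 0" using calculation(3) by auto
  ultimately show "\<sigma> \<subseteq> P" by blast
qed

lemma supp_zero: "supp (\<lambda>_. 0)" by (auto simp: supp_def)

lemma bd_zero: "bd r n (\<lambda>_. 0) = (\<lambda>_. 0)"
  by (cases n) (auto simp: bd_alt supp_zero)

lemma bd_lin:
  assumes "supp c" "supp c'"
  shows "bd r n (\<lambda>\<sigma>. x * c \<sigma> + y * c' \<sigma>) = (\<lambda>\<tau>. x * bd r n c \<tau> + y * bd r n c' \<tau>)"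
proof (cases n)
  case 0 then show ?thesis by simp
next
  case (Suc m)
  show ?thesis
  proof
    fix \<tau>
    have "(\<Sum>v\<in>P-\<tau>. sg v \<tau> * (x * c (insert v \<tau>) + y * c' (insert v \<tau>))) =
          (\<Sum>v\<in>P-\<tau>. x * (sg v \<tau> * c (insert v \<tau>)) + y * (sg v \<tau> * c' (insert v \<tau>)))"
      by (rule sum.cong) (simp_all add: distrib_left mult.left_commute)
    also have "\<dots> = x * (\<Sum>v\<in>P-\<tau>. sg v \<tau> * c (insert v \<tau>)) + y * (\<Sum>v\<in>P-\<tau>. sg v \<tau> * c' (insert v \<tau>))"
      by (simp add: sum.distrib sum_distrib_left)
    finally show "bd r n (\<lambda>\<sigma>. x * c \<sigma> + y * c' \<sigma>) \<tau> = x * bd r n c \<tau> + y * bd r n c' \<tau>"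
      using Suc bd_alt[OF supp_lin[OF assms]] bd_alt[OF assms(1)] bd_alt[OF assms(2)] by simp
  qed
qed

lemma bd_diff:
  assumes "supp c" "supp c'"
  shows "bd r n (\<lambda>\<sigma>. c \<sigma> - c' \<sigma>) = (\<lambda>\<tau>. bd r n c \<tau> - bd r n c' \<tau>)"
  using bd_lin[OF assms, where x=1 and y="-1" and n=n] by simp

lemma bd_add:
  assumes "supp c" "supp c'"
  shows "bd r n (\<lambda>\<sigma>. c \<sigma> + c' \<sigma>) = (\<lambda>\<tau>. bd r n c \<tau> + bd r n c' \<tau>)"
  using bd_lin[OF assms, where x=1 and y="1" and n=n] by simp

lemma supp_sum: "\<forall>i\<in>A. supp (f i :: 'a set \<Rightarrow> 'k::comm_ring_1) \<Longrightarrow> supp (\<lambda>\<sigma>. - (\<Sum>i\<in>A. f i \<sigma>))"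
proof (unfold supp_def, intro allI impI)
  fix \<sigma> assume "\<forall>i\<in>A. \<forall>\<sigma>. f i \<sigma> \<noteq> 0 \<longrightarrow> \<sigma> \<subseteq> P" "- (\<Sum>i\<in>A. f i \<sigma>) \<noteq> 0"
  then show "\<sigma> \<subseteq> P"
  proof (cases "\<sigma> \<subseteq> P")
    case False
    assume h: "\<forall>i\<in>A. \<forall>\<sigma>. f i \<sigma> \<noteq> 0 \<longrightarrow> \<sigma> \<subseteq> P" "- (\<Sum>i\<in>A. f i \<sigma>) \<noteq> 0"
    then have "\<forall>i\<in>A. f i \<sigma> = 0" using False by blast
    then have "(\<Sum>i\<in>A. f i \<sigma>) = 0" by simp
    then show ?thesis using h(2) by auto
  qed
qed

lemma bd_negsum:
  assumes "\<forall>i\<in>A. supp (f i)"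
  shows "bd r n (\<lambda>\<sigma>. - (\<Sum>i\<in>A. f i \<sigma>)) \<tau> = - (\<Sum>i\<in>A. bd r n (f i) \<tau>)"
proof (cases n)
  case 0 then show ?thesis by simp
next
  case (Suc m)
  have "bd r n (\<lambda>\<sigma>. - (\<Sum>i\<in>A. f i \<sigma>)) \<tau> = (\<Sum>v\<in>P-\<tau>. sg v \<tau> * - (\<Sum>i\<in>A. f i (insert v \<tau>)))"
    using bd_alt[OF supp_sum[OF assms]] Suc by simp
  also have "\<dots> = - (\<Sum>i\<in>A. \<Sum>v\<in>P-\<tau>. sg v \<tau> * f i (insert v \<tau>))"
  proof -
    have "(\<Sum>v\<in>P-\<tau>. sg v \<tau> * - (\<Sum>i\<in>A. f i (insert v \<tau>))) =
          - (\<Sum>v\<in>P-\<tau>. \<Sum>i\<in>A. sg v \<tau> * f i (insert v \<tau>))"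
      by (simp add: sum_distrib_left sum_negf)
    also have "\<dots> = - (\<Sum>i\<in>A. \<Sum>v\<in>P-\<tau>. sg v \<tau> * f i (insert v \<tau>))"
      by (rule arg_cong[where f=uminus], rule sum.swap)
    finally show ?thesis .
  qed
  also have "\<dots> = - (\<Sum>i\<in>A. bd r n (f i) \<tau>)"
    using assms Suc by (simp add: bd_alt)
  finally show ?thesis .
qed

lemma chains_supp: "c \<in> chains (order_complex r S) k \<Longrightarrow> S \<subseteq> P \<Longrightarrow> supp c"
  by (auto simp: chains_def supp_def order_complex_def)

lemma chains_lin: "(c :: 'b set \<Rightarrow> 'k::comm_ring_1) \<in> chains K k \<Longrightarrow> c' \<in> chains K k \<Longrightarrow> (\<lambda>\<sigma>. x * c \<sigma> + y * c' \<sigma>) \<in> chains K k"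
proof (unfold chains_def, intro CollectI allI impI)
  fix \<sigma> assume "c \<in> {c. \<forall>\<sigma>. c \<sigma> \<noteq> 0 \<longrightarrow> \<sigma> \<in> K \<and> card \<sigma> = Suc k}" "c' \<in> {c. \<forall>\<sigma>. c \<sigma> \<noteq> 0 \<longrightarrow> \<sigma> \<in> K \<and> card \<sigma> = Suc k}" "x * c \<sigma> + y * c' \<sigma> \<noteq> 0"
  moreover have "c \<sigma> \<noteq> 0 \<or> c' \<sigma> \<noteq> 0" using calculation(3) by auto
  ultimately show "\<sigma> \<in> K \<and> card \<sigma> = Suc k" by blast
qed

lemma chains_zero': "(\<lambda>_. 0) \<in> chains K k" by (auto simp: chains_def)

lemma bd_chains:
  assumes "c \<in> chains (order_complex r S) (Suc n)"
  shows "bd r (Suc n) c \<in> chains (order_complex r S) n"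
proof (unfold chains_def, intro CollectI allI impI)
  fix \<tau> assume "bd r (Suc n) c \<tau> \<noteq> 0"
  then obtain v where v: "v \<notin> \<tau>" "c (insert v \<tau>) \<noteq> 0"
    unfolding bd_def by (metis (mono_tags, lifting) empty_Collect_eq nat.distinct(1) sum.empty)
  then have h: "insert v \<tau> \<in> order_complex r S" "card (insert v \<tau>) = Suc (Suc n)"
    using assms by (auto simp: chains_def)
  then have fin\<tau>: "finite \<tau>" by (auto simp: order_complex_def)
  then have "card \<tau> = Suc n" using h v by simp
  then show "\<tau> \<in> order_complex r S \<and> card \<tau> = Suc n"
    using h by (auto simp: order_complex_def is_chain_def)
qed

lemma sg_insert:
  assumes "finite \<tau>" "a \<notin> \<tau>"
  shows "sg v (insert a \<tau>) = (if (v, a) \<in> r then - sg v \<tau> else (sg v \<tau> :: 'k::comm_ring_1))"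
proof (cases "(v, a) \<in> r")
  case True
  then have e: "{w \<in> insert a \<tau>. (v, w) \<in> r} = insert a {w \<in> \<tau>. (v, w) \<in> r}" by auto
  have "finite {w \<in> \<tau>. (v, w) \<in> r}" using assms(1) by simp
  moreover have "a \<notin> {w \<in> \<tau>. (v, w) \<in> r}" using assms(2) by simp
  ultimately have "card {w \<in> insert a \<tau>. (v, w) \<in> r} = Suc (card {w \<in> \<tau>. (v, w) \<in> r})"
    unfolding e by (rule card_insert_disjoint)
  then show ?thesis using True unfolding sg_def by simp
next
  case False
  then have "{w \<in> insert a \<tau>. (v, w) \<in> r} = {w \<in> \<tau>. (v, w) \<in> r}" by auto
  then show ?thesis using False unfolding sg_def by simp
qed

end



lemma sum_antisym_zero:
  fixes F :: "'x \<times> 'x \<Rightarrow> 'k::comm_ring_1"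
  assumes fD: "finite D" and sw: "\<forall>p\<in>D. prod.swap p \<in> D" and neg: "\<forall>p\<in>D. F (prod.swap p) = - F p"
    and R: "\<forall>p\<in>D. F p \<noteq> 0 \<longrightarrow> (p \<in> R \<longleftrightarrow> prod.swap p \<notin> R)"
  shows "sum F D = 0"
proof -
  define N where "N = {p\<in>D. F p \<noteq> 0}"
  have fN: "finite N" using fD by (simp add: N_def)
  have "sum F D = sum F N" by (rule sum.mono_neutral_right) (auto simp: N_def fD)
  also have "\<dots> = sum F (N \<inter> R) + sum F (N - R)"
    by (metis Diff_Diff_Int Diff_subset fN inf.commute sum.subset_diff)
  also have "N - R = prod.swap ` (N \<inter> R)"
  proof
    show "N - R \<subseteq> prod.swap ` (N \<inter> R)"
    proof
      fix q assume q: "q \<in> N - R"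
      then have "prod.swap q \<in> N" using sw neg by (auto simp: N_def)
      moreover have "prod.swap q \<in> R" using q R by (auto simp: N_def)
      ultimately show "q \<in> prod.swap ` (N \<inter> R)" by (metis IntI image_eqI swap_swap)
    qed
  next
    show "prod.swap ` (N \<inter> R) \<subseteq> N - R"
    proof
      fix q assume "q \<in> prod.swap ` (N \<inter> R)"
      then obtain p where p: "p \<in> N" "p \<in> R" "q = prod.swap p" by auto
      then have "q \<in> N" using sw neg by (auto simp: N_def)
      moreover have "q \<notin> R" using p R by (auto simp: N_def)
      ultimately show "q \<in> N - R" by simp
    qed
  qed
  also have "sum F (prod.swap ` (N \<inter> R)) = sum (F \<circ> prod.swap) (N \<inter> R)"
    by (rule sum.reindex) (metis inj_on_def swap_swap)
  also have "\<dots> = sum (\<lambda>p. - F p) (N \<inter> R)"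
    by (rule sum.cong) (use neg in \<open>auto simp: N_def\<close>)
  finally show ?thesis by (simp add: sum_negf)
qed

context fposet begin

lemma bdbd:
  assumes c: "c \<in> chains (order_complex r S) (Suc (Suc n))" and S: "S \<subseteq> P"
  shows "bd r (Suc n) (bd r (Suc (Suc n)) c) = (\<lambda>_. (0::'k::comm_ring_1))"
proof
  fix \<rho>
  have sc: "supp c" using chains_supp c S by blast
  have sc1: "supp (bd r (Suc (Suc n)) c)" using chains_supp[OF bd_chains[OF c] S] .
  define F where "F = (\<lambda>(v, u). sg v \<rho> * (sg u (insert v \<rho>) * c (insert u (insert v \<rho>))) :: 'k)"
  define D where "D = Sigma (P - \<rho>) (\<lambda>v. P - insert v \<rho>)"
  have "bd r (Suc n) (bd r (Suc (Suc n)) c) \<rho> =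
        (\<Sum>v\<in>P-\<rho>. sg v \<rho> * (\<Sum>u\<in>P - insert v \<rho>. sg u (insert v \<rho>) * c (insert u (insert v \<rho>))))"
    by (simp add: bd_alt sc sc1)
  also have "\<dots> = (\<Sum>v\<in>P-\<rho>. \<Sum>u\<in>P - insert v \<rho>. F (v, u))"
    by (simp add: F_def sum_distrib_left)
  also have "\<dots> = (\<Sum>(v, u)\<in>D. F (v, u))" unfolding D_def
    by (rule sum.Sigma) (use fin in auto)
  also have "\<dots> = sum F D" by (simp add: case_prod_eta)
  also have "\<dots> = 0"
  proof (rule sum_antisym_zero[where R = "{(v, u). (u, v) \<in> r}"])
    show "finite D" using fin by (simp add: D_def)
    show "\<forall>p\<in>D. prod.swap p \<in> D" by (auto simp: D_def)
    show "\<forall>p\<in>D. F (prod.swap p) = - F p"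
    proof
      fix p assume p: "p \<in> D"
      obtain v u where vu: "p = (v, u)" by fastforce
      have h: "v \<in> P" "u \<in> P" "v \<notin> \<rho>" "u \<notin> \<rho>" "u \<noteq> v" using p vu by (auto simp: D_def)
      have ins: "insert v (insert u \<rho>) = insert u (insert v \<rho>)" by auto
      show "F (prod.swap p) = - F p"
      proof (cases "c (insert u (insert v \<rho>)) = 0")
        case True then show ?thesis using ins by (simp add: F_def vu)
      next
        case False
        then have m: "insert u (insert v \<rho>) \<in> order_complex r S" using c by (auto simp: chains_def)
        then have fr: "finite \<rho>" by (auto simp: order_complex_def)
        have cmp: "(u, v) \<in> r \<or> (v, u) \<in> r" using m by (auto simp: order_complex_def is_chain_def)
        have ex: "\<not> ((u, v) \<in> r \<and> (v, u) \<in> r)" using antis h(5) by blast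
        have s1: "sg u (insert v \<rho>) = (if (u, v) \<in> r then - sg u \<rho> else (sg u \<rho> :: 'k))"
          using sg_insert fr h by blast
        have s2: "sg v (insert u \<rho>) = (if (v, u) \<in> r then - sg v \<rho> else (sg v \<rho> :: 'k))"
          using sg_insert fr h by blast
        show ?thesis using cmp ex ins by (auto simp: F_def vu s1 s2)
      qed
    qed
    show "\<forall>p\<in>D. F p \<noteq> 0 \<longrightarrow> (p \<in> {(v, u). (u, v) \<in> r}) = (prod.swap p \<notin> {(v, u). (u, v) \<in> r})"
    proof (intro ballI impI)
      fix p assume p: "p \<in> D" "F p \<noteq> 0"
      obtain v u where vu: "p = (v, u)" by fastforce
      have h: "u \<noteq> v" using p vu by (auto simp: D_def)
      have "c (insert u (insert v \<rho>)) \<noteq> 0" using p vu by (auto simp: F_def)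
      then have m: "insert u (insert v \<rho>) \<in> order_complex r S" using c by (auto simp: chains_def)
      have cmp: "(u, v) \<in> r \<or> (v, u) \<in> r" using m by (auto simp: order_complex_def is_chain_def)
      have ex: "\<not> ((u, v) \<in> r \<and> (v, u) \<in> r)" using antis h by blast
      show "(p \<in> {(v, u). (u, v) \<in> r}) = (prod.swap p \<notin> {(v, u). (u, v) \<in> r})"
        using cmp ex vu by auto
    qed
  qed
  finally show "bd r (Suc n) (bd r (Suc (Suc n)) c) \<rho> = 0" .
qed

lemma bdbd':
  assumes c: "c \<in> chains (order_complex r S) (Suc n)" and S: "S \<subseteq> P"
  shows "bd r n (bd r (Suc n) c) = (\<lambda>_. (0::'k::comm_ring_1))"
proof (cases n)
  case 0 then show ?thesis by simp
next
  case (Suc m) then show ?thesis using bdbd[of c S m] c S by simp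
qed

end



context fposet begin

definition cone :: "'a \<Rightarrow> ('a set \<Rightarrow> 'k::zero) \<Rightarrow> 'a set \<Rightarrow> 'k" where
  "cone a \<beta> = (\<lambda>\<sigma>. if a \<in> \<sigma> then \<beta> (\<sigma> - {a}) else 0)"

definition abd :: "nat \<Rightarrow> ('a set \<Rightarrow> 'k::comm_ring_1) \<Rightarrow> 'a set \<Rightarrow> 'k" where
  "abd k \<beta> \<tau> = (if k = 0 then (if \<tau> = {} then (\<Sum>v\<in>P. \<beta> {v}) else 0) else bd r k \<beta> \<tau>)"

lemma below_not_top: "w \<in> below r P a \<Longrightarrow> (a, w) \<notin> r"
  using antis by (auto simp: below_def)

lemma cone_bd:
  fixes \<beta> :: "'a set \<Rightarrow> 'k::comm_ring_1"
  assumes aP: "a \<in> P" and hb: "\<forall>\<tau>. \<beta> \<tau> \<noteq> 0 \<longrightarrow> \<tau> \<subseteq> below r P a \<and> finite \<tau> \<and> card \<tau> = Suc k"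
  shows "bd r (Suc k) (cone a \<beta>) \<rho> = (if a \<notin> \<rho> then \<beta> \<rho> else - abd k \<beta> (\<rho> - {a}))"
proof -
  have bP: "below r P a \<subseteq> P" by (auto simp: below_def)
  have aB: "a \<notin> below r P a" by (auto simp: below_def)
  have hb1: "\<And>\<tau>. \<beta> \<tau> \<noteq> 0 \<Longrightarrow> \<tau> \<subseteq> below r P a" using hb by simp
  have hb2: "\<And>\<tau>. \<beta> \<tau> \<noteq> 0 \<Longrightarrow> finite \<tau>" using hb by simp
  have hb3: "\<And>\<tau>. \<beta> \<tau> \<noteq> 0 \<Longrightarrow> card \<tau> = Suc k" using hb by simp
  have hb0: "\<And>\<tau>. a \<in> \<tau> \<Longrightarrow> \<beta> \<tau> = 0" using hb1 aB by blast
  have sb: "supp \<beta>" using hb1 bP unfolding supp_def by blast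
  have sc: "supp (cone a \<beta>)"
  proof (unfold supp_def, intro allI impI)
    fix \<sigma> assume "cone a \<beta> \<sigma> \<noteq> 0"
    then have "a \<in> \<sigma>" "\<beta> (\<sigma> - {a}) \<noteq> 0" by (auto simp: cone_def split: if_splits)
    then have "\<sigma> - {a} \<subseteq> P" using hb1 bP by blast
    then show "\<sigma> \<subseteq> P" using aP by blast
  qed
  have e: "bd r (Suc k) (cone a \<beta>) \<rho> = (\<Sum>v\<in>P-\<rho>. sg v \<rho> * cone a \<beta> (insert v \<rho>))"
    using bd_alt[OF sc] .
  show ?thesis
  proof (cases "a \<in> \<rho>")
    case False
    have "(\<Sum>v\<in>P-\<rho>. sg v \<rho> * cone a \<beta> (insert v \<rho>)) = (\<Sum>v\<in>P-\<rho>. if v = a then sg a \<rho> * \<beta> \<rho> else 0)"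
    proof (rule sum.cong)
      fix v assume "v \<in> P - \<rho>"
      show "sg v \<rho> * cone a \<beta> (insert v \<rho>) = (if v = a then sg a \<rho> * \<beta> \<rho> else 0)"
        using False by (auto simp: cone_def)
    qed simp
    also have "\<dots> = sg a \<rho> * \<beta> \<rho>" using False aP fin by (simp add: sum.delta)
    also have "\<dots> = \<beta> \<rho>"
    proof (cases "\<beta> \<rho> = 0")
      case False
      then have "\<rho> \<subseteq> below r P a" by (rule hb1)
      then have "{w \<in> \<rho>. (a, w) \<in> r} = {}" using below_not_top by blast
      then have "card {w \<in> \<rho>. (a, w) \<in> r} = 0" by (metis card.empty)
      then have "sg a \<rho> = (1::'k)" unfolding sg_def by simp
      then show ?thesis by simp
    qed simp
    finally show ?thesis using e False by simp
  next
    case True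
    define \<tau> where "\<tau> = \<rho> - {a}"
    have r\<tau>: "\<rho> = insert a \<tau>" "a \<notin> \<tau>" using True by (auto simp: \<tau>_def)
    have "(\<Sum>v\<in>P-\<rho>. sg v \<rho> * cone a \<beta> (insert v \<rho>)) = (\<Sum>v\<in>P-\<rho>. - (sg v \<tau> * \<beta> (insert v \<tau>)))"
    proof (rule sum.cong)
      fix v assume v: "v \<in> P - \<rho>"
      have "insert v \<rho> - {a} = insert v \<tau>" using v True by (auto simp: \<tau>_def)
      then have c: "cone a \<beta> (insert v \<rho>) = \<beta> (insert v \<tau>)"
        using True by (simp add: cone_def)
      show "sg v \<rho> * cone a \<beta> (insert v \<rho>) = - (sg v \<tau> * \<beta> (insert v \<tau>))"
      proof (cases "\<beta> (insert v \<tau>) = 0")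
        case False
        have h: "insert v \<tau> \<subseteq> below r P a" "finite (insert v \<tau>)" using hb1[OF False] hb2[OF False] .
        then have va: "(v, a) \<in> r" "finite \<tau>" by (auto simp: below_def)
        have "sg v (insert a \<tau>) = - (sg v \<tau> :: 'k)" using sg_insert[OF va(2) r\<tau>(2), of v] va(1) by simp
        then have "sg v \<rho> = - (sg v \<tau> :: 'k)" using r\<tau>(1) by simp
        then show ?thesis using c by simp
      qed (simp add: c)
    qed simp
    also have "\<dots> = - (\<Sum>v\<in>P-\<rho>. sg v \<tau> * \<beta> (insert v \<tau>))" by (simp add: sum_negf)
    also have "(\<Sum>v\<in>P-\<rho>. sg v \<tau> * \<beta> (insert v \<tau>)) = abd k \<beta> \<tau>"
    proof (cases k)
      case (Suc k')
      have "P - \<tau> = insert a (P - \<rho>)" using r\<tau> aP by auto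
      then have "(\<Sum>v\<in>P-\<tau>. sg v \<tau> * \<beta> (insert v \<tau>)) = sg a \<tau> * \<beta> (insert a \<tau>) + (\<Sum>v\<in>P-\<rho>. sg v \<tau> * \<beta> (insert v \<tau>))"
        using fin True by simp
      moreover have "\<beta> (insert a \<tau>) = 0" by (rule hb0) simp
      ultimately show ?thesis using Suc by (simp add: abd_def bd_alt[OF sb])
    next
      case 0
      show ?thesis
      proof (cases "\<tau> = {}")
        case False
        have z: "\<And>v. v \<in> P-\<rho> \<Longrightarrow> \<beta> (insert v \<tau>) = 0"
        proof (rule ccontr)
          fix v assume v: "v \<in> P - \<rho>" and nz: "\<beta> (insert v \<tau>) \<noteq> 0"
          have f1: "finite (insert v \<tau>)" by (rule hb2[OF nz])
          have c1: "card (insert v \<tau>) = 1" using hb3[OF nz] 0 by simp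
          have "v \<notin> \<tau>" using v r\<tau> by auto
          then have "card (insert v \<tau>) = Suc (card \<tau>)" using f1 by simp
          then have "card \<tau> = 0" using c1 by simp
          then show False using False f1 by simp
        qed
        have "(\<Sum>v\<in>P-\<rho>. sg v \<tau> * \<beta> (insert v \<tau>)) = 0"
          by (rule sum.neutral) (simp add: z)
        then show ?thesis using 0 False by (simp add: abd_def)
      next
        case True
        then have "\<rho> = {a}" using r\<tau> by simp
        then have "(\<Sum>v\<in>P-\<rho>. sg v \<tau> * \<beta> (insert v \<tau>)) = (\<Sum>v\<in>P-{a}. \<beta> {v})"
          using True by (simp add: sg_def)
        also have "\<dots> = (\<Sum>v\<in>P. \<beta> {v})"
        proof -
          have "\<beta> {a} = 0" by (rule hb0) simp
          then show ?thesis using sum.remove[OF fin aP, of "\<lambda>v. \<beta> {v}"] by simp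
        qed
        finally show ?thesis using 0 True by (simp add: abd_def)
      qed
    qed
    finally show ?thesis using e True \<tau>_def by simp
  qed
qed

end



context fposet begin

definition gam :: "('a set \<Rightarrow> 'k::zero) \<Rightarrow> 'a \<Rightarrow> 'a set \<Rightarrow> 'k" where
  "gam c a = (\<lambda>\<tau>. if a \<notin> \<tau> then c (insert a \<tau>) else 0)"

lemma skel_sub: "skel r P x \<subseteq> P" by (auto simp: skel_def)

lemma Dskel_sub: "Dskel r P x \<subseteq> order_complex r P"
  unfolding Dskel_def by (rule oc_sub[OF skel_sub])

lemma Dskel_supp: "c \<in> chains (Dskel r P x) k \<Longrightarrow> supp c"
  unfolding Dskel_def by (erule chains_supp) (rule skel_sub)

lemma gam_supp:
  fixes c :: "'a set \<Rightarrow> 'k::zero"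
  assumes c: "c \<in> chains (Dskel r P (int (Suc m))) k" and a: "pdim r P a = Suc m"
    and nz: "gam c a \<tau> \<noteq> 0"
  shows "\<tau> \<subseteq> below r P a \<and> finite \<tau> \<and> card \<tau> = k"
proof -
  have an: "a \<notin> \<tau>" and cz: "c (insert a \<tau>) \<noteq> 0" using nz by (auto simp: gam_def split: if_splits)
  then have m: "insert a \<tau> \<in> Dskel r P (int (Suc m))" "card (insert a \<tau>) = Suc k" using c by (auto simp: chains_def)
  have "insert a \<tau> - {a} \<subseteq> below r P a" by (rule top_below[OF m(1) _ a]) simp
  then have s: "\<tau> \<subseteq> below r P a" using an by simp
  have f: "finite \<tau>" using m(1) by (auto simp: Dskel_def order_complex_def)
  then have "card \<tau> = k" using m(2) an by simp
  then show ?thesis using s f by simp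
qed

lemma cone_gam: "cone a (gam c a) \<sigma> = (if a \<in> \<sigma> then c \<sigma> else 0)"
proof (cases "a \<in> \<sigma>")
  case True
  then have "insert a (\<sigma> - {a}) = \<sigma>" by auto
  then show ?thesis using True by (simp add: cone_def gam_def)
qed (simp add: cone_def)

lemma bd_agree:
  fixes c c' :: "'a set \<Rightarrow> 'k::comm_ring_1"
  assumes "supp c" "supp c'" "\<And>\<sigma>. a \<in> \<sigma> \<Longrightarrow> c \<sigma> = c' \<sigma>" "a \<in> \<rho>"
  shows "bd r n c \<rho> = bd r n c' \<rho>"
proof (cases n)
  case 0 then show ?thesis by simp
next
  case (Suc n')
  have "(\<Sum>v\<in>P-\<rho>. sg v \<rho> * c (insert v \<rho>)) = (\<Sum>v\<in>P-\<rho>. sg v \<rho> * c' (insert v \<rho>))"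
    by (rule sum.cong) (simp_all add: assms(3,4))
  then show ?thesis using Suc bd_alt[OF assms(1)] bd_alt[OF assms(2)] by simp
qed

lemma beta_exists_0:
  fixes c :: "'a set \<Rightarrow> 'k::comm_ring_1"
  assumes c: "c \<in> chains (Dskel r P (int (Suc m))) 0" and aP: "a \<in> P" and a: "pdim r P a = Suc m"
  shows "\<exists>\<beta>. \<beta> \<in> chains (order_complex r (below r P a)) 0 \<and> abd 0 \<beta> = gam c a"
proof -
  obtain b where b: "b \<in> below r P a" using below_ne[OF aP] a by auto
  have bP: "b \<in> P" using b by (simp add: below_def)
  define \<beta> where "\<beta> = (\<lambda>\<tau>. if \<tau> = {b} then c {a} else (0::'k))"
  have "{b} \<in> order_complex r (below r P a)"
    using b refl[OF bP] by (auto simp: order_complex_def is_chain_def)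
  then have ch: "\<beta> \<in> chains (order_complex r (below r P a)) 0" by (auto simp: chains_def \<beta>_def)
  have "abd 0 \<beta> = gam c a"
  proof
    fix \<tau>
    show "abd 0 \<beta> \<tau> = gam c a \<tau>"
    proof (cases "\<tau> = {}")
      case True
      have "(\<Sum>v\<in>P. \<beta> {v}) = (\<Sum>v\<in>P. if v = b then c {a} else 0)"
        by (rule sum.cong) (auto simp: \<beta>_def)
      also have "\<dots> = c {a}" using bP fin by simp
      finally show ?thesis using True by (simp add: abd_def gam_def)
    next
      case False
      have "gam c a \<tau> = 0"
      proof (rule ccontr)
        assume nz: "gam c a \<tau> \<noteq> 0"
        have "card \<tau> = 0" "finite \<tau>" using gam_supp[OF c a nz] by simp_all
        then show False using False by simp
      qed
      then show ?thesis using False by (simp add: abd_def)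
    qed
  qed
  then show ?thesis using ch by blast
qed

lemma gam_chains:
  fixes c :: "'a set \<Rightarrow> 'k::comm_ring_1"
  assumes c: "c \<in> chains (Dskel r P (int (Suc m))) (Suc j)" and a: "pdim r P a = Suc m"
  shows "gam c a \<in> chains (order_complex r (below r P a)) j"
proof (unfold chains_def, intro CollectI allI impI)
  fix \<tau> assume nz: "gam c a \<tau> \<noteq> 0"
  have h: "\<tau> \<subseteq> below r P a" "finite \<tau>" "card \<tau> = Suc j" using gam_supp[OF c a nz] by simp_all
  have an: "a \<notin> \<tau>" "c (insert a \<tau>) \<noteq> 0" using nz by (auto simp: gam_def split: if_splits)
  then have "insert a \<tau> \<in> Dskel r P (int (Suc m))" using c by (auto simp: chains_def)
  then have "is_chain r (insert a \<tau>)" by (simp add: Dskel_def order_complex_def)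
  then have "is_chain r \<tau>" by (rule chain_sub) auto
  moreover have "\<tau> \<noteq> {}" using h(3) by auto
  ultimately show "\<tau> \<in> order_complex r (below r P a) \<and> card \<tau> = Suc j"
    using h by (simp add: order_complex_def)
qed

lemma gam_abd_zero:
  fixes c :: "'a set \<Rightarrow> 'k::comm_ring_1"
  assumes c: "c \<in> chains (Dskel r P (int (Suc m))) (Suc j)" and aP: "a \<in> P" and a: "pdim r P a = Suc m"
    and bc: "bd r (Suc j) c \<in> chains (Dskel r P (int m)) j"
    and an: "a \<notin> \<tau>"
  shows "abd j (gam c a) \<tau> = 0"
proof -
  have sc: "supp c" by (rule Dskel_supp[OF c])
  have hb: "\<forall>\<tau>. gam c a \<tau> \<noteq> 0 \<longrightarrow> \<tau> \<subseteq> below r P a \<and> finite \<tau> \<and> card \<tau> = Suc j"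
    using gam_supp[OF c a] by blast
  have scone: "supp (cone a (gam c a))"
  proof (unfold supp_def, intro allI impI)
    fix \<sigma> assume "cone a (gam c a) \<sigma> \<noteq> 0"
    then have "c \<sigma> \<noteq> 0" by (simp add: cone_gam split: if_splits)
    then show "\<sigma> \<subseteq> P" using sc by (simp add: supp_def)
  qed
  have ain: "a \<in> insert a \<tau>" by simp
  have "bd r (Suc j) c (insert a \<tau>) = bd r (Suc j) (cone a (gam c a)) (insert a \<tau>)"
    by (rule bd_agree[OF sc scone _ ain]) (simp add: cone_gam)
  also have "\<dots> = - abd j (gam c a) (insert a \<tau> - {a})"
    using cone_bd[OF aP hb] by simp
  also have "insert a \<tau> - {a} = \<tau>" using an by simp
  finally have e: "bd r (Suc j) c (insert a \<tau>) = - abd j (gam c a) \<tau>" .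
  have "insert a \<tau> \<notin> Dskel r P (int m)" by (rule has_top[OF ain a])
  then have "bd r (Suc j) c (insert a \<tau>) = 0" using bc by (auto simp: chains_def)
  then show ?thesis using e by simp
qed

lemma beta_exists_Suc:
  fixes c :: "'a set \<Rightarrow> 'k::comm_ring_1"
  assumes hyp: "\<forall>a\<in>P. \<forall>m'::nat. int m' \<le> int (pdim r P a) - 2 \<longrightarrow>
           red_homology_vanishes r (order_complex r (below r P a)) m' TYPE('k)"
    and km: "Suc j \<le> m"
    and c: "c \<in> chains (Dskel r P (int (Suc m))) (Suc j)" and aP: "a \<in> P" and a: "pdim r P a = Suc m"
    and bc: "bd r (Suc j) c \<in> chains (Dskel r P (int m)) j"
  shows "\<exists>\<beta>. \<beta> \<in> chains (order_complex r (below r P a)) (Suc j) \<and> abd (Suc j) \<beta> = gam c a"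
proof -
  let ?K = "order_complex r (below r P a)"
  have gch: "gam c a \<in> chains ?K j" by (rule gam_chains[OF c a])
  have z: "\<And>\<tau>. a \<notin> \<tau> \<Longrightarrow> abd j (gam c a) \<tau> = 0" by (rule gam_abd_zero[OF c aP a bc])
  have red: "gam c a \<in> red_cycles r ?K j"
  proof (cases j)
    case 0
    have s1: "(\<Sum>v\<in>P. gam c a {v}) = 0" using z[of "{}"] 0 by (simp add: abd_def)
    have bP: "below r P a \<subseteq> P" by (auto simp: below_def)
    have finK: "finite ?K"
    proof -
      have "?K \<subseteq> Pow P" using bP by (auto simp: order_complex_def)
      then show ?thesis using fin by (meson finite_Pow_iff finite_subset)
    qed
    have sub: "(\<lambda>v. {v}) ` below r P a \<subseteq> ?K"
      using refl bP by (auto simp: order_complex_def is_chain_def)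
    have "sum (gam c a) ?K = sum (gam c a) ((\<lambda>v. {v}) ` below r P a)"
    proof (rule sum.mono_neutral_right[OF finK sub], rule ballI)
      fix \<tau> assume t: "\<tau> \<in> ?K - (\<lambda>v. {v}) ` below r P a"
      show "gam c a \<tau> = 0"
      proof (rule ccontr)
        assume nz: "gam c a \<tau> \<noteq> 0"
        have h: "\<tau> \<subseteq> below r P a" "card \<tau> = Suc 0" using gam_supp[OF c a nz] 0 by simp_all
        have "card \<tau> = 1" using h(2) by simp
        then obtain v where "\<tau> = {v}" by (rule card_1_singletonE)
        then show False using t h(1) by auto
      qed
    qed
    also have "\<dots> = (\<Sum>v\<in>below r P a. gam c a {v})"
      by (rule sum.reindex_cong[where l = "\<lambda>v. {v}"]) (auto simp: inj_on_def)
    also have "\<dots> = (\<Sum>v\<in>P. gam c a {v})"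
    proof (rule sum.mono_neutral_left[OF fin bP], rule ballI)
      fix v assume v: "v \<in> P - below r P a"
      show "gam c a {v} = 0"
      proof (rule ccontr)
        assume nz: "gam c a {v} \<noteq> 0"
        have "{v} \<subseteq> below r P a" using gam_supp[OF c a nz] by simp
        then show False using v by simp
      qed
    qed
    finally have "sum (gam c a) ?K = 0" using s1 by simp
    then show ?thesis using gch 0 by (simp add: red_cycles_def)
  next
    case (Suc j')
    have sg: "supp (gam c a)" using chains_supp[OF gch] by (auto simp: below_def)
    have "bd r j (gam c a) = (\<lambda>_. 0)"
    proof
      fix \<tau>
      show "bd r j (gam c a) \<tau> = 0"
      proof (cases "a \<in> \<tau>")
        case False
        then show ?thesis using z[OF False] Suc by (simp add: abd_def)
      next
        case True
        have "(\<Sum>v\<in>P-\<tau>. sg v \<tau> * gam c a (insert v \<tau>)) = 0"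
          by (rule sum.neutral) (simp add: gam_def True)
        then show ?thesis using Suc bd_alt[OF sg] by simp
      qed
    qed
    then show ?thesis using gch Suc by (simp add: red_cycles_def)
  qed
  have "int j \<le> int (pdim r P a) - 2" using km a by simp
  then have "red_homology_vanishes r ?K j TYPE('k)" using hyp aP by blast
  then have "gam c a \<in> boundaries r ?K j" using red by (auto simp: red_homology_vanishes_def)
  then obtain \<beta> where \<beta>: "\<beta> \<in> chains ?K (Suc j)" "gam c a = bd r (Suc j) \<beta>"
    by (auto simp: boundaries_def)
  then have "abd (Suc j) \<beta> = gam c a" by (simp add: abd_def fun_eq_iff)
  then show ?thesis using \<beta>(1) by blast
qed

end



context fposet begin

lemma V:
  fixes c :: "'a set \<Rightarrow> 'k::comm_ring_1"
  assumes hyp: "\<forall>a\<in>P. \<forall>m'::nat. int m' \<le> int (pdim r P a) - 2 \<longrightarrow>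
           red_homology_vanishes r (order_complex r (below r P a)) m' TYPE('k)"
    and km: "k \<le> m"
    and c: "c \<in> chains (Dskel r P (int (Suc m))) k"
    and bc: "bd r k c \<in> chains (Dskel r P (int m)) (k - 1)"
  shows "\<exists>e l. e \<in> chains (order_complex r P) (Suc k) \<and> l \<in> chains (Dskel r P (int m)) k \<and>
           c = (\<lambda>\<sigma>. bd r (Suc k) e \<sigma> + l \<sigma>)"
proof -
  define A where "A = {a \<in> P. pdim r P a = Suc m}"
  have finA: "finite A" using fin by (simp add: A_def)
  have sc: "supp c" by (rule Dskel_supp[OF c])
  have "\<forall>a\<in>A. \<exists>\<beta>. \<beta> \<in> chains (order_complex r (below r P a)) k \<and> abd k \<beta> = gam c a"
  proof
    fix a assume "a \<in> A"
    then have aP: "a \<in> P" and a: "pdim r P a = Suc m" by (auto simp: A_def)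
    show "\<exists>\<beta>. \<beta> \<in> chains (order_complex r (below r P a)) k \<and> abd k \<beta> = gam c a"
    proof (cases k)
      case 0 then show ?thesis using beta_exists_0[of c m a] c aP a by simp
    next
      case (Suc j)
      then show ?thesis using beta_exists_Suc[OF hyp, of j m c a] km c aP a bc by simp
    qed
  qed
  then obtain \<beta> where \<beta>: "\<And>a. a \<in> A \<Longrightarrow> \<beta> a \<in> chains (order_complex r (below r P a)) k"
    "\<And>a. a \<in> A \<Longrightarrow> abd k (\<beta> a) = gam c a"
    by metis
  have bsup: "\<And>a \<tau>. a \<in> A \<Longrightarrow> \<beta> a \<tau> \<noteq> 0 \<Longrightarrow> \<tau> \<in> order_complex r (below r P a) \<and> card \<tau> = Suc k"
    using \<beta>(1) by (auto simp: chains_def)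
  have hb: "\<And>a. a \<in> A \<Longrightarrow> \<forall>\<tau>. \<beta> a \<tau> \<noteq> 0 \<longrightarrow> \<tau> \<subseteq> below r P a \<and> finite \<tau> \<and> card \<tau> = Suc k"
    using bsup by (auto simp: order_complex_def)
  have scone: "\<forall>a\<in>A. supp (cone a (\<beta> a))"
  proof (intro ballI, unfold supp_def, intro allI impI)
    fix a \<sigma> assume aA: "a \<in> A" and nz: "cone a (\<beta> a) \<sigma> \<noteq> 0"
    then have "a \<in> \<sigma>" "\<beta> a (\<sigma> - {a}) \<noteq> 0" by (auto simp: cone_def split: if_splits)
    then have "\<sigma> - {a} \<subseteq> below r P a" using hb[OF aA] by blast
    moreover have "a \<in> P" using aA by (simp add: A_def)
    ultimately show "\<sigma> \<subseteq> P" by (auto simp: below_def)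
  qed
  define e where "e = (\<lambda>\<sigma>. - (\<Sum>a\<in>A. cone a (\<beta> a) \<sigma>))"
  define l where "l = (\<lambda>\<sigma>. c \<sigma> - bd r (Suc k) e \<sigma>)"
  have ce: "c = (\<lambda>\<sigma>. bd r (Suc k) e \<sigma> + l \<sigma>)" by (simp add: l_def)
  have bde: "\<And>\<rho>. bd r (Suc k) e \<rho> = - (\<Sum>a\<in>A. if a \<notin> \<rho> then \<beta> a \<rho> else - gam c a (\<rho> - {a}))"
  proof -
    fix \<rho>
    have "bd r (Suc k) e \<rho> = - (\<Sum>a\<in>A. bd r (Suc k) (cone a (\<beta> a)) \<rho>)"
      unfolding e_def by (rule bd_negsum[OF scone])
    also have "(\<Sum>a\<in>A. bd r (Suc k) (cone a (\<beta> a)) \<rho>) = (\<Sum>a\<in>A. if a \<notin> \<rho> then \<beta> a \<rho> else - gam c a (\<rho> - {a}))"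
    proof (rule sum.cong)
      fix a assume aA: "a \<in> A"
      then have aP: "a \<in> P" by (simp add: A_def)
      show "bd r (Suc k) (cone a (\<beta> a)) \<rho> = (if a \<notin> \<rho> then \<beta> a \<rho> else - gam c a (\<rho> - {a}))"
        using cone_bd[OF aP hb[OF aA]] \<beta>(2)[OF aA] by simp
    qed simp
    finally show "bd r (Suc k) e \<rho> = - (\<Sum>a\<in>A. if a \<notin> \<rho> then \<beta> a \<rho> else - gam c a (\<rho> - {a}))" .
  qed
  have lch: "l \<in> chains (Dskel r P (int m)) k"
  proof (unfold chains_def, intro CollectI allI impI)
    fix \<rho> assume lnz: "l \<rho> \<noteq> 0"
    have lr: "l \<rho> = c \<rho> + (\<Sum>a\<in>A. if a \<notin> \<rho> then \<beta> a \<rho> else - gam c a (\<rho> - {a}))"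
      by (simp add: l_def bde)
    show "\<rho> \<in> Dskel r P (int m) \<and> card \<rho> = Suc k"
    proof (cases "\<exists>a0\<in>A. a0 \<in> \<rho>")
      case True
      then obtain a0 where a0: "a0 \<in> A" "a0 \<in> \<rho>" by blast
      have a0p: "pdim r P a0 = Suc m" "a0 \<in> P" using a0 by (auto simp: A_def)
      have "(\<Sum>a\<in>A. if a \<notin> \<rho> then \<beta> a \<rho> else - gam c a (\<rho> - {a})) = (\<Sum>a\<in>A. if a = a0 then - c \<rho> else 0)"
      proof (rule sum.cong)
        fix a assume aA: "a \<in> A"
        have ap: "pdim r P a = Suc m" "a \<in> P" using aA by (auto simp: A_def)
        show "(if a \<notin> \<rho> then \<beta> a \<rho> else - gam c a (\<rho> - {a})) = (if a = a0 then - c \<rho> else 0)"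
        proof (cases "a \<in> \<rho>")
          case True
          have g: "gam c a (\<rho> - {a}) = c \<rho>"
          proof -
            have "insert a (\<rho> - {a}) = \<rho>" using True by auto
            then show ?thesis by (simp add: gam_def)
          qed
          show ?thesis
          proof (cases "a = a0")
            case False
            have "c \<rho> = 0"
            proof (rule ccontr)
              assume "c \<rho> \<noteq> 0"
              then have "\<rho> \<in> Dskel r P (int (Suc m))" using c by (auto simp: chains_def)
              then have "a = a0" using top_unique[of \<rho> m a0 a] a0p a0 True ap by simp
              then show False using False by simp
            qed
            then show ?thesis using True g False by simp
          qed (use True g in simp)
        next
          case False
          have "\<beta> a \<rho> = 0"
          proof (rule ccontr)
            assume "\<beta> a \<rho> \<noteq> 0"
            then have "\<rho> \<subseteq> below r P a" using hb[OF aA] by blast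
            then have "a0 \<in> below r P a" using a0 by blast
            then have "pdim r P a0 < pdim r P a" using pdim_less[of a a0] ap by (simp add: below_def)
            then show False using a0p ap by simp
          qed
          moreover have "a \<noteq> a0" using False a0 by blast
          ultimately show ?thesis using False by simp
        qed
      qed simp
      also have "\<dots> = - c \<rho>" using a0 finA by simp
      finally have "l \<rho> = 0" using lr by simp
      then show ?thesis using lnz by simp
    next
      case False
      have s: "(\<Sum>a\<in>A. if a \<notin> \<rho> then \<beta> a \<rho> else - gam c a (\<rho> - {a})) = (\<Sum>a\<in>A. \<beta> a \<rho>)"
        by (rule sum.cong) (use False in auto)
      show ?thesis
      proof (cases "c \<rho> = 0")
        case False
        then have m: "\<rho> \<in> Dskel r P (int (Suc m))" "card \<rho> = Suc k" using c by (auto simp: chains_def)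
        have "\<forall>x\<in>\<rho>. pdim r P x \<noteq> Suc m"
        proof
          fix x assume x: "x \<in> \<rho>"
          have "x \<in> P" using m(1) x Dskel_sub by (auto simp: order_complex_def)
          then show "pdim r P x \<noteq> Suc m" using x \<open>\<not> (\<exists>a0\<in>A. a0 \<in> \<rho>)\<close> by (auto simp: A_def)
        qed
        then show ?thesis using not_top[OF m(1)] m(2) by simp
      next
        case True
        then have "(\<Sum>a\<in>A. \<beta> a \<rho>) \<noteq> 0" using lnz lr s by simp
        then obtain a where aA: "a \<in> A" and nz: "\<beta> a \<rho> \<noteq> 0" by (meson sum.neutral)
        have h: "\<rho> \<in> order_complex r (below r P a)" "card \<rho> = Suc k" using bsup[OF aA nz] by simp_all
        have "a \<in> P" "pdim r P a = Suc m" using aA by (auto simp: A_def)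
        then have "\<rho> \<in> Dskel r P (int m)" using oc_below_Dskel h(1) by blast
        then show ?thesis using h(2) by simp
      qed
    qed
  qed
  have ech: "e \<in> chains (order_complex r P) (Suc k)"
  proof (unfold chains_def, intro CollectI allI impI)
    fix \<sigma> assume enz: "e \<sigma> \<noteq> 0"
    then have "(\<Sum>a\<in>A. cone a (\<beta> a) \<sigma>) \<noteq> 0" by (simp add: e_def)
    then obtain a where aA: "a \<in> A" and nz: "cone a (\<beta> a) \<sigma> \<noteq> 0" by (meson sum.neutral)
    have as: "a \<in> \<sigma>" and bnz: "\<beta> a (\<sigma> - {a}) \<noteq> 0" using nz by (auto simp: cone_def split: if_splits)
    have h: "\<sigma> - {a} \<in> order_complex r (below r P a)" "card (\<sigma> - {a}) = Suc k" using bsup[OF aA bnz] by simp_all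
    have aP: "a \<in> P" using aA by (simp add: A_def)
    have sig: "\<sigma> = insert a (\<sigma> - {a})" using as by auto
    have f: "finite (\<sigma> - {a})" and sub: "\<sigma> - {a} \<subseteq> below r P a" and ch: "is_chain r (\<sigma> - {a})"
      using h(1) by (auto simp: order_complex_def)
    have "is_chain r (insert a (\<sigma> - {a}))"
      using ch sub refl[OF aP] unfolding is_chain_def below_def by blast
    then have ch2: "is_chain r \<sigma>" using sig by simp
    have sP: "\<sigma> \<subseteq> P" using sub aP sig by (auto simp: below_def)
    have fs: "finite \<sigma>" using f sig by (metis finite_insert)
    have "card \<sigma> = Suc (Suc k)" using h(2) f sig by (metis card_insert_disjoint Diff_iff insertI1)
    then show "\<sigma> \<in> order_complex r P \<and> card \<sigma> = Suc (Suc k)"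
      using ch2 sP fs as by (auto simp: order_complex_def)
  qed
  show ?thesis using ech lch ce by blast
qed

end



context fposet begin

lemma push:
  fixes k :: nat
  assumes hyp: "\<forall>a\<in>P. \<forall>m'::nat. int m' \<le> int (pdim r P a) - 2 \<longrightarrow>
           red_homology_vanishes r (order_complex r (below r P a)) m' TYPE('k::comm_ring_1)"
  shows "\<forall>c::'a set \<Rightarrow> 'k. c \<in> chains (Dskel r P (int (k + j))) k \<longrightarrow>
           bd r k c \<in> chains (Dskel r P (int k - 1)) (k - 1) \<longrightarrow>
           (\<exists>c'' e. c'' \<in> chains (Dskel r P (int k)) k \<and> e \<in> chains (order_complex r P) (Suc k) \<and>
              c = (\<lambda>\<sigma>. bd r (Suc k) e \<sigma> + c'' \<sigma>))"
proof (induction j)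
  case 0
  show ?case
  proof (intro allI impI)
    fix c :: "'a set \<Rightarrow> 'k" assume "c \<in> chains (Dskel r P (int (k + 0))) k"
    then show "\<exists>c'' e. c'' \<in> chains (Dskel r P (int k)) k \<and> e \<in> chains (order_complex r P) (Suc k) \<and>
              c = (\<lambda>\<sigma>. bd r (Suc k) e \<sigma> + c'' \<sigma>)"
    proof (intro exI conjI)
      show "c \<in> chains (Dskel r P (int k)) k" using \<open>c \<in> _\<close> by simp
      show "(\<lambda>_. 0::'k) \<in> chains (order_complex r P) (Suc k)" by (rule chains_zero')
      show "c = (\<lambda>\<sigma>. bd r (Suc k) (\<lambda>_. 0::'k) \<sigma> + c \<sigma>)" by (simp add: bd_zero)
    qed
  qed
next
  case (Suc j)
  show ?case
  proof (intro allI impI)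
    fix c :: "'a set \<Rightarrow> 'k"
    assume c: "c \<in> chains (Dskel r P (int (k + Suc j))) k"
      and bc: "bd r k c \<in> chains (Dskel r P (int k - 1)) (k - 1)"
    have c': "c \<in> chains (Dskel r P (int (Suc (k + j)))) k" using c by simp
    have "Dskel r P (int k - 1) \<subseteq> Dskel r P (int (k + j))" by (rule Dskel_mono) simp
    then have bc': "bd r k c \<in> chains (Dskel r P (int (k + j))) (k - 1)" using bc chains_mono by blast
    obtain e1 l where e1: "e1 \<in> chains (order_complex r P) (Suc k)" and l: "l \<in> chains (Dskel r P (int (k + j))) k"
      and ce: "c = (\<lambda>\<sigma>. bd r (Suc k) e1 \<sigma> + l \<sigma>)"
      using V[OF hyp _ c' bc'] by auto
    have le: "l = (\<lambda>\<sigma>. c \<sigma> - bd r (Suc k) e1 \<sigma>)" using ce by (simp add: fun_eq_iff)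
    have sc: "supp c" by (rule Dskel_supp[OF c])
    have sbe: "supp (bd r (Suc k) e1)" by (rule chains_supp[OF bd_chains[OF e1]]) simp
    have "bd r k l = (\<lambda>\<tau>. bd r k c \<tau> - bd r k (bd r (Suc k) e1) \<tau>)"
      unfolding le by (rule bd_diff[OF sc sbe])
    also have "bd r k (bd r (Suc k) e1) = (\<lambda>_. 0)" by (rule bdbd'[OF e1]) simp
    finally have bl: "bd r k l = bd r k c" by simp
    obtain c'' e2 where c'': "c'' \<in> chains (Dskel r P (int k)) k" and e2: "e2 \<in> chains (order_complex r P) (Suc k)"
      and le2: "l = (\<lambda>\<sigma>. bd r (Suc k) e2 \<sigma> + c'' \<sigma>)"
      using Suc.IH l bc bl by metis
    have se1: "supp e1" by (rule chains_supp[OF e1]) simp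
    have se2: "supp e2" by (rule chains_supp[OF e2]) simp
    have "bd r (Suc k) (\<lambda>\<sigma>. e1 \<sigma> + e2 \<sigma>) = (\<lambda>\<tau>. bd r (Suc k) e1 \<tau> + bd r (Suc k) e2 \<tau>)"
      by (rule bd_add[OF se1 se2])
    then have "c = (\<lambda>\<sigma>. bd r (Suc k) (\<lambda>\<sigma>. e1 \<sigma> + e2 \<sigma>) \<sigma> + c'' \<sigma>)"
      using ce le2 by (simp add: fun_eq_iff algebra_simps)
    moreover have "(\<lambda>\<sigma>. e1 \<sigma> + e2 \<sigma>) \<in> chains (order_complex r P) (Suc k)"
      using chains_lin[OF e1 e2, of 1 1] by simp
    ultimately show "\<exists>c'' e. c'' \<in> chains (Dskel r P (int k)) k \<and> e \<in> chains (order_complex r P) (Suc k) \<and>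
              c = (\<lambda>\<sigma>. bd r (Suc k) e \<sigma> + c'' \<sigma>)" using c'' by blast
  qed
qed

end



context fposet begin

lemma relb_zero:
  assumes "m < int (Suc j)" "m' < int j"
  shows "x \<in> rel_boundaries r (Dskel r P m) (Dskel r P m') j \<longleftrightarrow> x = (\<lambda>_. (0::'k::comm_ring_1))"
proof
  assume "x \<in> rel_boundaries r (Dskel r P m) (Dskel r P m') j"
  then obtain c l where c: "c \<in> chains (Dskel r P m) (Suc j)" and l: "l \<in> chains (Dskel r P m') j"
    and x: "x = (\<lambda>\<sigma>. bd r (Suc j) c \<sigma> + l \<sigma>)" by (auto simp: rel_boundaries_def)
  have "c = (\<lambda>_. 0)" by (rule chains_zero[OF c assms(1)])
  moreover have "l = (\<lambda>_. 0)" by (rule chains_zero[OF l assms(2)])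
  ultimately show "x = (\<lambda>_. 0)" using x by (simp add: bd_zero)
next
  assume "x = (\<lambda>_. (0::'k))"
  then show "x \<in> rel_boundaries r (Dskel r P m) (Dskel r P m') j"
    unfolding rel_boundaries_def using chains_zero'
    by (intro CollectI exI[of _ "\<lambda>_. 0"] conjI) (auto simp: bd_zero)
qed

lemma conic_cycles_eq:
  "conic_cycles r P n = (cycles r (Dskel r P (int n)) n :: ('a set \<Rightarrow> 'k::comm_ring_1) set)"
proof -
  have "\<And>x::'a set \<Rightarrow> 'k. x \<in> rel_boundaries r (Dskel r P (int n - 1)) (Dskel r P (int n - 2)) (n - 1) \<longleftrightarrow> x = (\<lambda>_. 0)"
    by (rule relb_zero) auto
  then show ?thesis
    by (auto simp: conic_cycles_def cycles_def rel_cycles_def chains_zero')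
qed

lemma conic_b_in:
  assumes "w \<in> conic_boundaries r P n"
  shows "w \<in> (boundaries r (order_complex r P) n :: ('a set \<Rightarrow> 'k::comm_ring_1) set)"
proof -
  obtain c b where c: "c \<in> rel_cycles r (Dskel r P (int n + 1)) (Dskel r P (int n)) (Suc n)"
    and b: "b \<in> rel_boundaries r (Dskel r P (int n)) (Dskel r P (int n - 1)) n"
    and w: "w = (\<lambda>\<sigma>. bd r (Suc n) c \<sigma> + b \<sigma>)"
    using assms by (auto simp: conic_boundaries_def)
  have "b = (\<lambda>_. 0)" using b by (subst (asm) relb_zero) auto
  then have w': "w = bd r (Suc n) c" using w by simp
  have "c \<in> chains (Dskel r P (int n + 1)) (Suc n)" using c by (simp add: rel_cycles_def)
  then have "c \<in> chains (order_complex r P) (Suc n)" using chains_mono[OF Dskel_sub] by blast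
  then show ?thesis using w' by (auto simp: boundaries_def)
qed

lemma conic_b_of:
  fixes w :: "'a set \<Rightarrow> 'k::comm_ring_1"
  assumes hyp: "\<forall>a\<in>P. \<forall>m'::nat. int m' \<le> int (pdim r P a) - 2 \<longrightarrow>
           red_homology_vanishes r (order_complex r (below r P a)) m' TYPE('k)"
    and wc: "w \<in> chains (Dskel r P (int n)) n" and wb: "w \<in> boundaries r (order_complex r P) n"
  shows "w \<in> conic_boundaries r P n"
proof -
  obtain c where c: "c \<in> chains (order_complex r P) (Suc n)" and w: "w = bd r (Suc n) c"
    using wb by (auto simp: boundaries_def)
  have c1: "c \<in> chains (Dskel r P (int (Suc n + card P))) (Suc n)"
    using c Dskel_top[of "Suc n"] by (simp add: add.commute)
  have bc: "bd r (Suc n) c \<in> chains (Dskel r P (int (Suc n) - 1)) (Suc n - 1)" using wc w by simp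
  obtain c'' e where c'': "c'' \<in> chains (Dskel r P (int (Suc n))) (Suc n)"
    and e: "e \<in> chains (order_complex r P) (Suc (Suc n))"
    and ce: "c = (\<lambda>\<sigma>. bd r (Suc (Suc n)) e \<sigma> + c'' \<sigma>)"
    using push[OF hyp, of "Suc n" "card P", rule_format, OF c1 bc] by (elim exE conjE) simp
  have cc: "c'' = (\<lambda>\<sigma>. c \<sigma> - bd r (Suc (Suc n)) e \<sigma>)" using ce by (simp add: fun_eq_iff)
  have sc: "supp c" by (rule chains_supp[OF c]) simp
  have sbe: "supp (bd r (Suc (Suc n)) e)" by (rule chains_supp[OF bd_chains[OF e]]) simp
  have "bd r (Suc n) c'' = (\<lambda>\<tau>. bd r (Suc n) c \<tau> - bd r (Suc n) (bd r (Suc (Suc n)) e) \<tau>)"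
    unfolding cc by (rule bd_diff[OF sc sbe])
  also have "bd r (Suc n) (bd r (Suc (Suc n)) e) = (\<lambda>_. 0)" by (rule bdbd'[OF e]) simp
  finally have bw: "bd r (Suc n) c'' = w" using w by (simp add: fun_eq_iff)
  have rc: "c'' \<in> rel_cycles r (Dskel r P (int n + 1)) (Dskel r P (int n)) (Suc n)"
    using c'' bw wc by (simp add: rel_cycles_def add.commute)
  have b0: "(\<lambda>_. 0::'k) \<in> rel_boundaries r (Dskel r P (int n)) (Dskel r P (int n - 1)) n"
    by (subst relb_zero) auto
  show ?thesis unfolding conic_boundaries_def
    by (rule CollectI, rule exI[of _ c''], rule exI[of _ "\<lambda>_. 0::'k"]) (simp add: rc b0 bw)
qed

lemma B_lin:
  assumes "u \<in> (boundaries r (order_complex r P) n :: ('a set \<Rightarrow> 'k::comm_ring_1) set)"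
    "v \<in> boundaries r (order_complex r P) n"
  shows "(\<lambda>x. a * u x + b * v x) \<in> boundaries r (order_complex r P) n"
proof -
  obtain c c' where c: "c \<in> chains (order_complex r P) (Suc n)" "u = bd r (Suc n) c"
    and c': "c' \<in> chains (order_complex r P) (Suc n)" "v = bd r (Suc n) c'"
    using assms by (auto simp: boundaries_def)
  have eq: "(\<lambda>x. a * u x + b * v x) = bd r (Suc n) (\<lambda>\<sigma>. a * c \<sigma> + b * c' \<sigma>)"
    using bd_lin[OF chains_supp[OF c(1) subset_refl] chains_supp[OF c'(1) subset_refl], of "Suc n" a b] c(2) c'(2) by simp
  have mem: "(\<lambda>\<sigma>. a * c \<sigma> + b * c' \<sigma>) \<in> chains (order_complex r P) (Suc n)"
    by (rule chains_lin[OF c(1) c'(1)])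
  show ?thesis unfolding boundaries_def by (rule image_eqI[where f="bd r (Suc n)", OF eq mem])
qed

lemma Z_lin:
  assumes "K \<subseteq> order_complex r P" "z \<in> (cycles r K n :: ('a set \<Rightarrow> 'k::comm_ring_1) set)" "z' \<in> cycles r K n"
  shows "(\<lambda>x. a * z x + b * z' x) \<in> cycles r K n"
proof -
  have ch: "z \<in> chains K n" "z' \<in> chains K n" "bd r n z = (\<lambda>_. 0)" "bd r n z' = (\<lambda>_. 0)"
    using assms by (auto simp: cycles_def)
  have "z \<in> chains (order_complex r P) n" "z' \<in> chains (order_complex r P) n"
    using ch chains_mono[OF assms(1)] by blast+
  then have "supp z" "supp z'" using chains_supp[OF _ subset_refl] by blast+
  then have "bd r n (\<lambda>x. a * z x + b * z' x) = (\<lambda>_. 0)" using bd_lin[of z z' n a b] ch by simp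
  then show ?thesis using chains_lin[OF ch(1) ch(2)] by (simp add: cycles_def)
qed

lemma exists_rep:
  fixes z :: "'a set \<Rightarrow> 'k::comm_ring_1"
  assumes hyp: "\<forall>a\<in>P. \<forall>m'::nat. int m' \<le> int (pdim r P a) - 2 \<longrightarrow>
           red_homology_vanishes r (order_complex r (below r P a)) m' TYPE('k)"
    and z: "z \<in> cycles r (order_complex r P) n"
  shows "\<exists>w. w \<in> cycles r (Dskel r P (int n)) n \<and> (\<lambda>x. z x - w x) \<in> boundaries r (order_complex r P) n"
proof -
  have zc: "z \<in> chains (order_complex r P) n" and bz: "bd r n z = (\<lambda>_. 0)" using z by (auto simp: cycles_def)
  have z1: "z \<in> chains (Dskel r P (int (n + card P))) n" using zc Dskel_top[of n] by (simp add: add.commute)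
  have bz1: "bd r n z \<in> chains (Dskel r P (int n - 1)) (n - 1)" using bz chains_zero' by simp
  obtain c'' e where c'': "c'' \<in> chains (Dskel r P (int n)) n"
    and e: "e \<in> chains (order_complex r P) (Suc n)"
    and ce: "z = (\<lambda>\<sigma>. bd r (Suc n) e \<sigma> + c'' \<sigma>)"
    using push[OF hyp, of n "card P", rule_format, OF z1 bz1] by (elim exE conjE) simp
  have cc: "c'' = (\<lambda>\<sigma>. z \<sigma> - bd r (Suc n) e \<sigma>)" using ce by (simp add: fun_eq_iff)
  have sz: "supp z" by (rule chains_supp[OF zc]) simp
  have sbe: "supp (bd r (Suc n) e)" by (rule chains_supp[OF bd_chains[OF e]]) simp
  have "bd r n c'' = (\<lambda>\<tau>. bd r n z \<tau> - bd r n (bd r (Suc n) e) \<tau>)"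
    unfolding cc by (rule bd_diff[OF sz sbe])
  also have "bd r n (bd r (Suc n) e) = (\<lambda>_. 0)" by (rule bdbd'[OF e]) simp
  finally have "bd r n c'' = (\<lambda>_. 0)" using bz by simp
  then have "c'' \<in> cycles r (Dskel r P (int n)) n" using c'' by (simp add: cycles_def)
  moreover have "(\<lambda>x. z x - c'' x) = bd r (Suc n) e" using ce by (simp add: fun_eq_iff)
  then have "(\<lambda>x. z x - c'' x) \<in> boundaries r (order_complex r P) n" using e by (simp add: boundaries_def)
  ultimately show ?thesis by blast
qed

end

theorem mainTheorem1:
  fixes P :: "'a set" and r :: "'a rel" and n :: nat
  assumes "finite P"
    and "partial_order_on P r"
    and "\<forall>a\<in>P. \<forall>m::nat. int m \<le> int (pdim r P a) - 2 \<longrightarrow>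
           red_homology_vanishes r (order_complex r (below r P a)) m TYPE('k::comm_ring_1)"
  shows "quot_iso (cycles r (order_complex r P) n :: ('a set \<Rightarrow> 'k) set)
                  (boundaries r (order_complex r P) n)
                  (conic_cycles r P n) (conic_boundaries r P n)"
proof -
  interpret fposet P r using assms(1,2) by unfold_locales
  note hyp = assms(3)
  let ?K = "order_complex r P"
  let ?Kn = "Dskel r P (int n)"
  let ?Z1 = "cycles r ?K n :: ('a set \<Rightarrow> 'k) set"
  let ?B1 = "boundaries r ?K n :: ('a set \<Rightarrow> 'k) set"
  let ?Z2 = "cycles r ?Kn n :: ('a set \<Rightarrow> 'k) set"
  let ?B2 = "conic_boundaries r P n :: ('a set \<Rightarrow> 'k) set"
  define f where "f = (\<lambda>z::'a set \<Rightarrow> 'k. SOME w. w \<in> ?Z2 \<and> (\<lambda>x. z x - w x) \<in> ?B1)"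
  have fz: "f z \<in> ?Z2 \<and> (\<lambda>x. z x - f z x) \<in> ?B1" if z: "z \<in> ?Z1" for z
    unfolding f_def by (rule someI_ex[OF exists_rep[OF hyp z]])
  have Z2ch: "\<And>w. w \<in> ?Z2 \<Longrightarrow> w \<in> chains ?Kn n" by (simp add: cycles_def)
  have Z21: "\<And>w. w \<in> ?Z2 \<Longrightarrow> w \<in> ?Z1"
    using chains_mono[OF Dskel_sub] by (auto simp: cycles_def)
  have B2: "\<And>w. w \<in> chains ?Kn n \<Longrightarrow> w \<in> ?B1 \<Longrightarrow> w \<in> ?B2"
    by (rule conic_b_of[OF hyp])
  have chl: "\<And>u v a b. u \<in> chains ?Kn n \<Longrightarrow> v \<in> chains ?Kn n \<Longrightarrow> (\<lambda>x. a * u x + b * v x :: 'k) \<in> chains ?Kn n"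
    by (rule chains_lin)
  have KnK: "?Kn \<subseteq> ?K" by (rule Dskel_sub)
  show ?thesis
    unfolding quot_iso_def conic_cycles_eq
  proof (intro exI[of _ f] conjI ballI allI)
    fix z assume z: "z \<in> ?Z1"
    show "f z \<in> ?Z2" using fz[OF z] by simp
  next
    fix z z' a b assume z: "z \<in> ?Z1" and z': "z' \<in> ?Z1"
    define Z where "Z = (\<lambda>y. a * z y + b * z' y)"
    have Z: "Z \<in> ?Z1" unfolding Z_def by (rule Z_lin[OF _ z z']) simp
    have p0: "(\<lambda>x. Z x - f Z x) \<in> ?B1" using fz[OF Z] by simp
    have p: "(\<lambda>x. z x - f z x) \<in> ?B1" using fz[OF z] by simp
    have p': "(\<lambda>x. z' x - f z' x) \<in> ?B1" using fz[OF z'] by simp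
    have q: "(\<lambda>x. a * (z x - f z x) + b * (z' x - f z' x)) \<in> ?B1" using B_lin[OF p p'] by simp
    have D1: "(\<lambda>x. (-1) * (Z x - f Z x) + 1 * (a * (z x - f z x) + b * (z' x - f z' x))) \<in> ?B1"
      using B_lin[OF p0 q, of "-1" 1] by simp
    have eqD: "(\<lambda>x. (-1) * (Z x - f Z x) + 1 * (a * (z x - f z x) + b * (z' x - f z' x))) =
               (\<lambda>x. f Z x - (a * f z x + b * f z' x))"
      by (simp add: fun_eq_iff Z_def algebra_simps)
    have c1: "(\<lambda>x. a * f z x + b * f z' x) \<in> chains ?Kn n"
      using chl[OF Z2ch[OF conjunct1[OF fz[OF z]]] Z2ch[OF conjunct1[OF fz[OF z']]]] .
    have c2: "(\<lambda>x. 1 * f Z x + (-1) * (a * f z x + b * f z' x)) \<in> chains ?Kn n"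
      using chl[OF Z2ch[OF conjunct1[OF fz[OF Z]]] c1] .
    have eqc: "(\<lambda>x. 1 * f Z x + (-1) * (a * f z x + b * f z' x)) = (\<lambda>x. f Z x - (a * f z x + b * f z' x))"
      by (simp add: fun_eq_iff)
    have Dc: "(\<lambda>x. f Z x - (a * f z x + b * f z' x)) \<in> chains ?Kn n" using c2 unfolding eqc .
    have Db: "(\<lambda>x. f Z x - (a * f z x + b * f z' x)) \<in> ?B1" using D1 unfolding eqD .
    have "(\<lambda>x. f Z x - (a * f z x + b * f z' x)) \<in> ?B2" by (rule B2[OF Dc Db])
    then show "(\<lambda>x. f (\<lambda>y. a * z y + b * z' y) x - (a * f z x + b * f z' x)) \<in> ?B2"
      unfolding Z_def .
  next
    fix z assume z: "z \<in> ?Z1"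
    have p: "(\<lambda>x. z x - f z x) \<in> ?B1" using fz[OF z] by simp
    have fzc: "f z \<in> chains ?Kn n" using Z2ch fz[OF z] by simp
    show "f z \<in> ?B2 \<longleftrightarrow> z \<in> ?B1"
    proof
      assume "f z \<in> ?B2"
      then have "f z \<in> ?B1" by (rule conic_b_in)
      then have "(\<lambda>x. 1 * (z x - f z x) + 1 * f z x) \<in> ?B1" using B_lin[OF p, of "f z" 1 1] by simp
      then show "z \<in> ?B1" by simp
    next
      assume zb: "z \<in> ?B1"
      have "(\<lambda>x. 1 * z x + (-1) * (z x - f z x)) \<in> ?B1" by (rule B_lin[OF zb p])
      then have "f z \<in> ?B1" by simp
      then show "f z \<in> ?B2" by (rule B2[OF fzc])
    qed
  next
    fix w assume w: "w \<in> ?Z2"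
    have w1: "w \<in> ?Z1" by (rule Z21[OF w])
    have p: "(\<lambda>x. w x - f w x) \<in> ?B1" using fz[OF w1] by simp
    have "(\<lambda>x. 1 * w x + (-1) * f w x) \<in> chains ?Kn n"
      using chl[OF Z2ch[OF w] Z2ch[OF conjunct1[OF fz[OF w1]]]] .
    then have "(\<lambda>x. w x - f w x) \<in> chains ?Kn n" by simp
    then have "(\<lambda>x. w x - f w x) \<in> ?B2" using B2 p by simp
    then show "\<exists>z\<in>?Z1. (\<lambda>x. w x - f z x) \<in> ?B2" using w1 by blast
  qed
qed



end
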